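(* Let $T$ be a primed tableau of shape $\lambda/\mu$ over $X'_k$, $1\le i\le k-1$, $j=i+1$, with $f_i(T)\ne 0$, and let $x,q$ be the boxes chosen in the definition of $f_i$. Then either $q=x$ and $f_i(T)$ is obtained from $T$ by replacing the entry $i$ in $x$ by $j$, or $q\ne x$ and $f_i(T)$ is obtained by replacing the $i$ in $x$ by $j'$ and a $j'$ in $q$ by $j$. Moreover, $f_i(T)$ is again a primed tableau of shape $\lambda/\mu$.
   Context: Primed tableaux: Fix $k$. $X'_k=\{1'<1<2'<2<\dots<k'<k\}$; moving one step up in this chain is "increasing by a half unit" (e.g. $i'\to i$, $i\to (i+1)'$). A primed tableau of (skew) shape $\lambda/\mu$ is a filling of the diagram (English convention; "below" = next row down) with letters of $X'_k$, rows and columns weakly increasing, at most one $i'$ per row and at most one $i$ per column, for every $i$. For a position $p$, $c(p)$ is its entry, with $c(p)=\infty$ if $p$ is not a box of $T$. The reading word of $T$ is the word of its unprimed entries, read row by row left to right, from the bottom row to the top row. Bracketing: fix $i$, $j=i+1$. In the subword of the reading word consisting of the letters $i$ and $j$, repeatedly pair (bracket) a letter $j$ with a letter $i$ occurring later such that no unbracketed letters lie between them, until the unbracketed letters form a word $i^aj^b$. Operator $f_i$: if there is no unbracketed $i$, $f_i(T)=0$. Otherwise let $x$ be the box of $T$ corresponding to the rightmost unbracketed $i$; $E_x$ the position immediately right of $x$, $S_x$ the position immediately below $x$. Choose a box $q$: (F1) if $c(E_x)\ge j$ and $c(S_x)>j$, $q=x$; (F2) if $c(E_x)=j'$, $q=E_x$;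 (F3) if $c(E_x)\ge j$ and $c(S_x)\in\{j',j\}$, take the maximal ribbon (connected skew strip) starting at $S_x$ and extending by steps South and/or West consisting only of boxes with entries $j$ or $j'$, and let $q$ be its Southwest-most box. Then $f_i(T)$ is obtained from $T$ by increasing $c(x)$ by a half unit and then increasing $c(q)$ by a half unit (so if $q=x$ the entry of $x$ increases by a full unit). *)

theory Defs
  imports Main "HOL-Library.Extended_Nat"
begin

(* Encoding of the alphabet X'_k: the letter i' is coded as 2*i - 1 and the
   letter i as 2*i (i = 1..k).  Thus "increasing by a half unit" is +1.
   A tableau is a function T :: nat*nat => nat (row, column), rows indexed
   from 0 top to bottom (English convention), columns from 0 left to right;
   T p = 0 means that p is not a box of T. *)

type_synonym pos = "nat \<times> nat"
type_synonym ptab = "pos \<Rightarrow> nat"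

definition unpr :: "nat \<Rightarrow> nat" where "unpr i = 2 * i"
definition pr :: "nat \<Rightarrow> nat" where "pr i = 2 * i - 1"

definition cval :: "ptab \<Rightarrow> pos \<Rightarrow> enat" where
  "cval T p = (if T p = 0 then \<infinity> else enat (T p))"

definition is_partition :: "nat list \<Rightarrow> bool" where
  "is_partition lam \<longleftrightarrow> sorted_wrt (\<ge>) lam"

definition part_contained :: "nat list \<Rightarrow> nat list \<Rightarrow> bool" where
  "part_contained mu lam \<longleftrightarrow> length mu \<le> length lam \<and> (\<forall>r < length mu. mu ! r \<le> lam ! r)"

definition skew_diagram :: "nat list \<Rightarrow> nat list \<Rightarrow> pos set" where
  "skew_diagram lam mu = {(r, c). r < length lam \<and>
      (if r < length mu then mu ! r else 0) \<le> c \<and> c < lam ! r}"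

definition primed_tableau :: "nat \<Rightarrow> nat list \<Rightarrow> nat list \<Rightarrow> ptab \<Rightarrow> bool" where
  "primed_tableau k lam mu T \<longleftrightarrow>
     is_partition lam \<and> is_partition mu \<and> part_contained mu lam \<and>
     {p. T p \<noteq> 0} = skew_diagram lam mu \<and>
     (\<forall>p. T p \<noteq> 0 \<longrightarrow> T p \<le> 2 * k) \<and>
     (\<forall>r c c'. T (r, c) \<noteq> 0 \<and> T (r, c') \<noteq> 0 \<and> c \<le> c' \<longrightarrow> T (r, c) \<le> T (r, c')) \<and>
     (\<forall>r r' c. T (r, c) \<noteq> 0 \<and> T (r', c) \<noteq> 0 \<and> r \<le> r' \<longrightarrow> T (r, c) \<le> T (r', c)) \<and>
     (\<forall>r c c'. T (r, c) \<noteq> 0 \<and> odd (T (r, c)) \<and> c \<noteq> c' \<longrightarrow> T (r, c') \<noteq> T (r, c)) \<and>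
     (\<forall>r r' c. T (r, c) \<noteq> 0 \<and> even (T (r, c)) \<and> r \<noteq> r' \<longrightarrow> T (r', c) \<noteq> T (r, c))"

definition bnd :: "ptab \<Rightarrow> nat" where
  "bnd T = Suc (Max (insert 0 (fst ` {p. T p \<noteq> 0} \<union> snd ` {p. T p \<noteq> 0})))"

definition reading_boxes :: "ptab \<Rightarrow> pos list" where
  "reading_boxes T = filter (\<lambda>p. T p \<noteq> 0 \<and> even (T p))
     (concat (map (\<lambda>r. map (\<lambda>c. (r, c)) [0..<bnd T]) (rev [0..<bnd T])))"

definition reading_word :: "ptab \<Rightarrow> nat list" where
  "reading_word T = map (\<lambda>p. T p div 2) (reading_boxes T)"

(* bracketing: scanning left to right, n = number of currently unbracketed j's;
   a letter i is bracketed with a pending j if there is one, otherwise it stays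
   unbracketed. *)
fun unbr_i :: "nat \<Rightarrow> ptab \<Rightarrow> nat \<Rightarrow> pos list \<Rightarrow> pos list" where
  "unbr_i i T n [] = []"
| "unbr_i i T n (p # ps) =
     (if T p = unpr (i + 1) then unbr_i i T (Suc n) ps
      else if T p = unpr i then
        (if n > 0 then unbr_i i T (n - 1) ps else p # unbr_i i T 0 ps)
      else unbr_i i T n ps)"

definition unbracketed_i :: "nat \<Rightarrow> ptab \<Rightarrow> pos list" where
  "unbracketed_i i T = unbr_i i T 0 (reading_boxes T)"

definition fx :: "nat \<Rightarrow> ptab \<Rightarrow> pos" where
  "fx i T = last (unbracketed_i i T)"

definition rstep :: "ptab \<Rightarrow> nat \<Rightarrow> (pos \<times> pos) set" where
  "rstep T i = {(p, p'). (p' = (Suc (fst p), snd p) \<or> (0 < snd p \<and> p' = (fst p, snd p - 1)))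
                   \<and> T p' \<in> {pr (i + 1), unpr (i + 1)}}"

definition ribbon_end :: "ptab \<Rightarrow> nat \<Rightarrow> pos \<Rightarrow> pos" where
  "ribbon_end T i s = (THE q. (s, q) \<in> (rstep T i)\<^sup>* \<and> (\<forall>q'. (q, q') \<notin> rstep T i))"

definition fq :: "nat \<Rightarrow> ptab \<Rightarrow> pos" where
  "fq i T = (let x = fx i T; E = (fst x, Suc (snd x)); S = (Suc (fst x), snd x); j = i + 1 in
     if cval T E \<ge> enat (unpr j) \<and> cval T S > enat (unpr j) then x
     else if cval T E = enat (pr j) then E
     else if cval T E \<ge> enat (unpr j) \<and> cval T S \<in> {enat (pr j), enat (unpr j)} then ribbon_end T i S
     else undefined)"

(* f_i; None represents 0 *)
definition f_op :: "nat \<Rightarrow> ptab \<Rightarrow> ptab option" where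
  "f_op i T = (if unbracketed_i i T = [] then None
     else (let x = fx i T; q = fq i T; T1 = T(x := T x + 1) in Some (T1(q := T1 q + 1))))"

end

theory Submission
  imports Defs
begin

definition stp :: "nat \<Rightarrow> ptab \<Rightarrow> nat \<Rightarrow> pos \<Rightarrow> nat" where
  "stp i T n p = (if T p = unpr (i+1) then Suc n else if T p = unpr i then n - 1 else n)"
definition cnt :: "nat \<Rightarrow> ptab \<Rightarrow> nat \<Rightarrow> pos list \<Rightarrow> nat" where
  "cnt i T n ps = foldl (stp i T) n ps"
definition cI :: "nat \<Rightarrow> ptab \<Rightarrow> pos list \<Rightarrow> nat" where
  "cI i T ps = length (filter (\<lambda>p. T p = unpr i) ps)"
definition cJ :: "nat \<Rightarrow> ptab \<Rightarrow> pos list \<Rightarrow> nat" where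
  "cJ i T ps = length (filter (\<lambda>p. T p = unpr (i+1)) ps)"
definition rowl :: "nat \<Rightarrow> nat list \<Rightarrow> pos list" where
  "rowl r L = map (\<lambda>c. (r, c)) L"
definition RF :: "nat \<Rightarrow> nat \<Rightarrow> pos list" where
  "RF B \<rho> = concat (map (\<lambda>r. rowl r [0..<B]) (rev [\<rho>..<B]))"
definition gg :: "nat \<Rightarrow> ptab \<Rightarrow> nat \<Rightarrow> nat \<Rightarrow> nat" where
  "gg i T B \<rho> = cnt i T 0 (RF B \<rho>)"
definition inset :: "ptab \<Rightarrow> nat \<Rightarrow> pos \<Rightarrow> bool" where
  "inset T i p \<longleftrightarrow> T p = pr (i+1) \<or> T p = unpr (i+1)"

lemma unbr_filter:
  assumes "\<forall>p. T p = unpr i \<or> T p = unpr (i+1) \<longrightarrow> P p"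
  shows "unbr_i i T n (filter P ys) = unbr_i i T n ys"
  using assms by (induction ys arbitrary: n) auto

lemma unbr_append:
  "unbr_i i T n (xs @ ys) = unbr_i i T n xs @ unbr_i i T (cnt i T n xs) ys"
  by (induction xs arbitrary: n) (auto simp: cnt_def stp_def)

lemma unbr_set: "set (unbr_i i T n ys) \<subseteq> {p \<in> set ys. T p = unpr i}"
  by (induction ys arbitrary: n) (auto simp: unpr_def)

lemma cnt_bound: "cnt i T n ys + cI i T ys \<ge> n + cJ i T ys"
proof (induction ys arbitrary: n)
  case Nil then show ?case by (simp add: cnt_def cI_def cJ_def)
next
  case (Cons p ys)
  show ?case using Cons.IH[of "Suc n"] Cons.IH[of "n - 1"] Cons.IH[of n]
    by (auto simp: cnt_def stp_def cI_def cJ_def unpr_def)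
qed

lemma cnt_append: "cnt i T n (xs @ ys) = cnt i T (cnt i T n xs) ys"
  by (simp add: cnt_def)

lemma cI_append: "cI i T (xs @ ys) = cI i T xs + cI i T ys" by (simp add: cI_def)
lemma cJ_append: "cJ i T (xs @ ys) = cJ i T xs + cJ i T ys" by (simp add: cJ_def)
lemma cI_zero: "cI i T ps = 0 \<longleftrightarrow> (\<forall>p\<in>set ps. T p \<noteq> unpr i)"
  by (simp add: cI_def filter_empty_conv)
lemma cJ_Cons: "cJ i T (p # ps) = (if T p = unpr (i+1) then 1 else 0) + cJ i T ps"
  by (simp add: cJ_def)
lemma cI_snoc: "cI i T (ps @ [p]) \<le> cI i T ps + 1"
  by (simp add: cI_def)

lemma upt_split: "a < n \<Longrightarrow> [0..<n] = [0..<a] @ a # [Suc a..<n]"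
  by (metis le_add1 le_add_same_cancel1 less_imp_le_nat upt_add_eq_append upt_conv_Cons add_0 le_add_diff_inverse)

lemma upt_split2: "a \<le> n \<Longrightarrow> [0..<n] = [0..<a] @ [a..<n]"
  by (metis le_add_diff_inverse upt_add_eq_append zero_le)

lemma RF_step: "\<rho> < B \<Longrightarrow> RF B \<rho> = RF B (Suc \<rho>) @ rowl \<rho> [0..<B]"
  by (simp add: RF_def upt_conv_Cons)

lemma gg_step: "\<rho> < B \<Longrightarrow> gg i T B \<rho> = cnt i T (gg i T B (Suc \<rho>)) (rowl \<rho> [0..<B])"
  by (simp add: gg_def RF_step cnt_append)

lemma pt_rowmono: "primed_tableau k lam mu T \<Longrightarrow> T (r,c) \<noteq> 0 \<Longrightarrow> T (r,c') \<noteq> 0 \<Longrightarrow> c \<le> c' \<Longrightarrow> T (r,c) \<le> T (r,c')"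
  unfolding primed_tableau_def by blast
lemma pt_colmono: "primed_tableau k lam mu T \<Longrightarrow> T (r,c) \<noteq> 0 \<Longrightarrow> T (r',c) \<noteq> 0 \<Longrightarrow> r \<le> r' \<Longrightarrow> T (r,c) \<le> T (r',c)"
  unfolding primed_tableau_def by blast
lemma pt_oddrow: "primed_tableau k lam mu T \<Longrightarrow> T (r,c) \<noteq> 0 \<Longrightarrow> odd (T (r,c)) \<Longrightarrow> c \<noteq> c' \<Longrightarrow> T (r,c') \<noteq> T (r,c)"
  unfolding primed_tableau_def by blast
lemma pt_evencol: "primed_tableau k lam mu T \<Longrightarrow> T (r,c) \<noteq> 0 \<Longrightarrow> even (T (r,c)) \<Longrightarrow> r \<noteq> r' \<Longrightarrow> T (r',c) \<noteq> T (r,c)"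
  unfolding primed_tableau_def by blast

lemma sw_le: "sorted_wrt (\<ge>) (xs::nat list) \<Longrightarrow> a \<le> b \<Longrightarrow> b < length xs \<Longrightarrow> xs ! b \<le> xs ! a"
  proof (cases "a = b")
  case False
  assume "sorted_wrt (\<ge>) xs" "a \<le> b" "b < length xs"
  then show ?thesis using sorted_wrt_nth_less[of "(\<ge>)" xs a b] False by auto
qed simp

lemma pt_conv:
  assumes pt: "primed_tableau k lam mu T" and "T (r1,c1) \<noteq> 0" "T (r2,c2) \<noteq> 0"
    and "r1 \<le> r" "r \<le> r2" "c1 \<le> c" "c \<le> c2"
  shows "T (r,c) \<noteq> 0"
proof -
  from pt have S: "{p. T p \<noteq> 0} = skew_diagram lam mu" and pl: "sorted_wrt (\<ge>) lam"
    and pm: "sorted_wrt (\<ge>) mu"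
    unfolding primed_tableau_def is_partition_def by auto
  have m1: "(r1,c1) \<in> skew_diagram lam mu" "(r2,c2) \<in> skew_diagram lam mu"
    using S assms(2,3) by auto
  let ?m = "\<lambda>r. if r < length mu then mu ! r else 0"
  have "?m r \<le> ?m r1" using sw_le[OF pm \<open>r1 \<le> r\<close>] \<open>r1 \<le> r\<close> by auto
  moreover have "lam ! r2 \<le> lam ! r" using sw_le[OF pl \<open>r \<le> r2\<close>] m1 by (auto simp: skew_diagram_def)
  ultimately have "(r,c) \<in> skew_diagram lam mu" using m1 assms(4-7)
    by (auto simp: skew_diagram_def split: if_splits)
  then show ?thesis using S by auto
qed

lemma pt_fin: assumes "primed_tableau k lam mu T" shows "finite {p. T p \<noteq> 0}"
proof -
  have "{p. T p \<noteq> 0} = skew_diagram lam mu" using assms unfolding primed_tableau_def by auto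
  also have "\<dots> \<subseteq> {..<length lam} \<times> {..<sum_list lam}"
  proof
    fix p assume "p \<in> skew_diagram lam mu"
    then show "p \<in> {..<length lam} \<times> {..<sum_list lam}"
      using elem_le_sum_list[of "fst p" lam] by (auto simp: skew_diagram_def)
  qed
  finally show ?thesis by (rule finite_subset) auto
qed

lemma pt_bnd: assumes "primed_tableau k lam mu T" "T p \<noteq> 0"
  shows "fst p < bnd T" "snd p < bnd T"
proof -
  have f: "finite (insert 0 (fst ` {p. T p \<noteq> 0} \<union> snd ` {p. T p \<noteq> 0}))"
    using pt_fin[OF assms(1)] by auto
  show "fst p < bnd T" unfolding bnd_def using Max_ge[OF f, of "fst p"] assms(2) by auto
  show "snd p < bnd T" unfolding bnd_def using Max_ge[OF f, of "snd p"] assms(2) by auto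
qed



lemma rstep_iff: "(p, p') \<in> rstep T i \<longleftrightarrow>
   (p' = (Suc (fst p), snd p) \<or> (0 < snd p \<and> p' = (fst p, snd p - 1))) \<and> inset T i p'"
  by (simp add: rstep_def inset_def)

lemma inset_nz: "inset T i p \<Longrightarrow> T p \<noteq> 0"
  by (auto simp: inset_def pr_def unpr_def)

lemma step_south:
  assumes pt: "primed_tableau k lam mu T" and "T p = pr (i+1)" and "(p, p') \<in> rstep T i"
  shows "p' = (Suc (fst p), snd p)"
proof (rule ccontr)
  assume ne: "p' \<noteq> (Suc (fst p), snd p)"
  obtain r c where p: "p = (r,c)" by fastforce
  from assms(3) ne have w: "0 < c" "p' = (r, c - 1)" and ins: "inset T i p'"
    by (auto simp: rstep_iff p)
  have nz: "T (r, c-1) \<noteq> 0" "T (r,c) \<noteq> 0" using inset_nz[OF ins] w assms(2) p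
    by (auto simp: pr_def)
  have "T (r,c-1) \<le> T (r,c)" using pt_rowmono[OF pt nz] by simp
  moreover have "T (r,c-1) \<noteq> T (r,c)"
    using pt_oddrow[OF pt nz(2), of "c-1"] assms(2) p w by (auto simp: pr_def)
  ultimately show False using ins w assms(2) p by (auto simp: inset_def pr_def unpr_def)
qed

lemma step_west:
  assumes pt: "primed_tableau k lam mu T" and "T p = unpr (i+1)" and "(p, p') \<in> rstep T i"
  shows "0 < snd p \<and> p' = (fst p, snd p - 1)"
proof (rule ccontr)
  assume ne: "\<not> (0 < snd p \<and> p' = (fst p, snd p - 1))"
  obtain r c where p: "p = (r,c)" by fastforce
  from assms(3) ne have w: "p' = (Suc r, c)" and ins: "inset T i p'"
    by (auto simp: rstep_iff p)
  have nz: "T (r,c) \<noteq> 0" "T (Suc r, c) \<noteq> 0" using inset_nz[OF ins] w assms(2) p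
    by (auto simp: unpr_def)
  have "T (r,c) \<le> T (Suc r,c)" using pt_colmono[OF pt nz] by simp
  moreover have "T (Suc r,c) \<noteq> T (r,c)"
    using pt_evencol[OF pt nz(1), of "Suc r"] assms(2) p by (auto simp: unpr_def)
  ultimately show False using ins w assms(2) p by (auto simp: inset_def pr_def unpr_def)
qed

lemma step_det:
  assumes pt: "primed_tableau k lam mu T" and "inset T i p" "(p, z1) \<in> rstep T i" "(p, z2) \<in> rstep T i"
  shows "z1 = z2"
  using assms(2) step_south[OF pt _ assms(3)] step_south[OF pt _ assms(4)]
    step_west[OF pt _ assms(3)] step_west[OF pt _ assms(4)]
  unfolding inset_def by auto

lemma reach_row: "(p, q) \<in> (rstep T i)\<^sup>* \<Longrightarrow> fst p \<le> fst q"
  by (induction rule: rtrancl_induct) (auto simp: rstep_iff)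

lemma reach_inset: "(p, q) \<in> (rstep T i)\<^sup>* \<Longrightarrow> inset T i p \<Longrightarrow> inset T i q"
  by (induction rule: rtrancl_induct) (auto simp: rstep_iff)

lemma term_exists:
  assumes pt: "primed_tableau k lam mu T"
  shows "\<exists>q. (p, q) \<in> (rstep T i)\<^sup>* \<and> (\<forall>q'. (q, q') \<notin> rstep T i)"
proof (induction p rule: measure_induct_rule[of "\<lambda>p. (bnd T - fst p) + snd p"])
  case (less p)
  show ?case
  proof (cases "\<exists>p'. (p, p') \<in> rstep T i")
    case False then show ?thesis by blast
  next
    case True
    then obtain p' where st: "(p, p') \<in> rstep T i" by blast
    then have "inset T i p'" by (simp add: rstep_iff)
    then have "fst p' < bnd T" using pt_bnd[OF pt] inset_nz by blast
    then have "(bnd T - fst p') + snd p' < (bnd T - fst p) + snd p"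
      using st by (auto simp: rstep_iff)
    then obtain q where "(p', q) \<in> (rstep T i)\<^sup>*" "\<forall>q'. (q, q') \<notin> rstep T i"
      using less by blast
    then show ?thesis using st converse_rtrancl_into_rtrancl by metis
  qed
qed

lemma term_unique:
  assumes pt: "primed_tableau k lam mu T" and r1: "(p, q1) \<in> (rstep T i)\<^sup>*"
    and t1: "\<forall>q'. (q1, q') \<notin> rstep T i"
  shows "inset T i p \<Longrightarrow> (p, q2) \<in> (rstep T i)\<^sup>* \<Longrightarrow> \<forall>q'. (q2, q') \<notin> rstep T i \<Longrightarrow> q1 = q2"
  using r1
proof (induction p rule: converse_rtrancl_induct)
  case base
  then show ?case using t1 by (auto elim: converse_rtranclE)
next
  case (step y z)
  from step.prems(2) show ?case
  proof (cases rule: converse_rtranclE)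
    case base then show ?thesis using step.prems(3) step.hyps(1) by blast
  next
    case (step z')
    have "z' = z" using step_det[OF pt \<open>inset T i y\<close> step(1)] \<open>(y, z) \<in> rstep T i\<close> by blast
    moreover have "inset T i z" using \<open>(y, z) \<in> rstep T i\<close> by (simp add: rstep_iff)
    ultimately show ?thesis using \<open>inset T i z \<Longrightarrow> (z, q2) \<in> (rstep T i)\<^sup>* \<Longrightarrow> _ \<Longrightarrow> q1 = q2\<close>
      step(2) \<open>\<forall>q'. (q2, q') \<notin> rstep T i\<close> by blast
  qed
qed

lemma ribbon_eq:
  assumes pt: "primed_tableau k lam mu T" and "inset T i s" "(s, q) \<in> (rstep T i)\<^sup>*"
    and "\<forall>q'. (q, q') \<notin> rstep T i"
  shows "ribbon_end T i s = q"
  unfolding ribbon_end_def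
proof (rule the_equality)
  show "(s, q) \<in> (rstep T i)\<^sup>* \<and> (\<forall>q'. (q, q') \<notin> rstep T i)" using assms(3,4) by blast
  fix q2 assume "(s, q2) \<in> (rstep T i)\<^sup>* \<and> (\<forall>q'. (q2, q') \<notin> rstep T i)"
  then show "q2 = q" using term_unique[OF pt assms(3,4) assms(2)] by metis
qed



lemma inv_path:
  assumes pt: "primed_tableau k lam mu T" and i1: "1 \<le> i"
    and tq: "\<forall>q'. (q, q') \<notin> rstep T i"
  shows "(p, q) \<in> (rstep T i)\<^sup>* \<Longrightarrow> inset T i p \<Longrightarrow> 1 \<le> fst p \<Longrightarrow>
    (if T q = unpr (i+1) then 1 else 0) + cI i T (rowl (fst p - 1) [0..<snd p])
      + cJ i T (rowl (fst p) [Suc (snd p)..<bnd T]) \<le> gg i T (bnd T) (fst p)"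
proof (induction p rule: converse_rtrancl_induct)
  case base
  obtain a w where q: "q = (a,w)" by fastforce
  let ?B = "bnd T"
  have nzq: "T (a,w) \<noteq> 0" using inset_nz[OF base(1)] q by simp
  have aB: "a < ?B" and wB: "w < ?B" using pt_bnd[OF pt nzq] by auto
  have qv: "T (a,w) = 2*i+1 \<or> T (a,w) = 2*i+2" using base(1) q by (auto simp: inset_def pr_def unpr_def)
  have c1: "cI i T (rowl a [w..<?B]) = 0"
    unfolding cI_zero rowl_def
  proof (intro ballI notI)
    fix p assume pm: "p \<in> set (map (\<lambda>c. (a, c)) [w..<?B])" and pe: "T p = unpr i"
    then obtain g where g: "w \<le> g" "g < ?B" "T (a,g) = unpr i" by auto
    then have "T (a,g) \<noteq> 0" using i1 by (simp add: unpr_def)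
    then have "T (a,w) \<le> T (a,g)" using pt_rowmono[OF pt nzq] g by blast
    then show False using qv g by (simp add: unpr_def)
  qed
  have c2: "cI i T (rowl (a-1) [0..<w]) = 0"
    unfolding cI_zero rowl_def
  proof (intro ballI notI)
    fix p assume pm: "p \<in> set (map (\<lambda>c. ((a-1), c)) [0..<w])" and pe: "T p = unpr i"
    then obtain g where g: "g < w" "T (a-1,g) = unpr i" by auto
    have a1: "1 \<le> a" using base(2) q by simp
    have nz1: "T (a-1,g) \<noteq> 0" using g i1 by (simp add: unpr_def)
    have nz2: "T (a, g) \<noteq> 0" using pt_conv[OF pt nz1 nzq, of a g] g by simp
    have nz3: "T (a, w-1) \<noteq> 0" using pt_conv[OF pt nz1 nzq, of a "w-1"] g by simp
    have "T (a-1,g) \<le> T (a,g)" using pt_colmono[OF pt nz1 nz2] by simp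
    moreover have "T (a,g) \<noteq> T (a-1,g)" using pt_evencol[OF pt nz1, of a] g a1 by (simp add: unpr_def)
    moreover have "T (a,g) \<le> T (a,w-1)" using pt_rowmono[OF pt nz2 nz3] g by simp
    moreover have "T (a,w-1) \<le> T (a,w)" using pt_rowmono[OF pt nz3 nzq] by simp
    moreover have "\<not> inset T i (a, w-1)" using tq q g by (auto simp: rstep_iff)
    ultimately show False using qv g by (auto simp: inset_def pr_def unpr_def)
  qed
  have gA: "gg i T ?B a = cnt i T (cnt i T (gg i T ?B (Suc a)) (rowl a [0..<w])) (rowl a [w..<?B])"
    using gg_step[OF aB] upt_split2[of w ?B] wB by (simp add: rowl_def cnt_append)
  have cJs: "cJ i T (rowl a [w..<?B]) = (if T (a,w) = unpr (i+1) then 1 else 0) + cJ i T (rowl a [Suc w..<?B])"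
    using wB by (simp add: upt_conv_Cons rowl_def cJ_Cons)
  show ?case using cnt_bound[where i=i and T=T and n="cnt i T (gg i T ?B (Suc a)) (rowl a [0..<w])" and ys="rowl a [w..<?B]"]
    gA c1 c2 cJs q by simp
next
  case (step y z)
  obtain \<rho> b where y: "y = (\<rho>, b)" by fastforce
  let ?B = "bnd T"
  have insz: "inset T i z" using step.hyps(1) by (simp add: rstep_iff)
  have nzy: "T (\<rho>,b) \<noteq> 0" using inset_nz[OF step.prems(1)] y by simp
  have rB: "\<rho> < ?B" and bB: "b < ?B" using pt_bnd[OF pt nzy] by auto
  have r1: "1 \<le> \<rho>" using step.prems(2) y by simp
  show ?case
  proof (cases "T y = pr (i+1)")
    case True
    have z: "z = (Suc \<rho>, b)" using step_south[OF pt True step.hyps(1)] y by simp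
    have IH: "(if T q = unpr (i+1) then 1 else 0) + cI i T (rowl \<rho> [0..<b])
      + cJ i T (rowl (Suc \<rho>) [Suc b..<?B]) \<le> gg i T ?B (Suc \<rho>)"
      using step.IH insz z by simp
    have gs: "gg i T ?B \<rho> = cnt i T (gg i T ?B (Suc \<rho>)) (rowl \<rho> [0..<?B])" using gg_step[OF rB] .
    have cb: "gg i T ?B (Suc \<rho>) + cJ i T (rowl \<rho> [0..<?B]) \<le> gg i T ?B \<rho> + cI i T (rowl \<rho> [0..<?B])"
      using cnt_bound[where i=i and T=T and n="gg i T ?B (Suc \<rho>)" and ys="rowl \<rho> [0..<?B]"] gs by simp
    have z1: "cI i T (rowl \<rho> [b..<?B]) = 0"
      unfolding cI_zero rowl_def
    proof (intro ballI notI)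
      fix p assume pm: "p \<in> set (map (\<lambda>c. (\<rho>, c)) [b..<?B])" and pe: "T p = unpr i"
      then obtain g where g: "b \<le> g" "g < ?B" "T (\<rho>,g) = unpr i" by auto
      then have "T (\<rho>,g) \<noteq> 0" using i1 by (simp add: unpr_def)
      then have "T (\<rho>,b) \<le> T (\<rho>,g)" using pt_rowmono[OF pt nzy] g by blast
      then show False using True y g by (simp add: unpr_def pr_def)
    qed
    have sI: "cI i T (rowl \<rho> [0..<?B]) = cI i T (rowl \<rho> [0..<b]) + cI i T (rowl \<rho> [b..<?B])"
      using upt_split2[of b ?B] bB by (simp add: rowl_def cI_append)
    have sJ: "cJ i T (rowl \<rho> [0..<?B]) \<ge> cJ i T (rowl \<rho> [Suc b..<?B])"
      using upt_split2[of "Suc b" ?B] bB by (simp add: rowl_def cJ_append cJ_Cons)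
    have z2: "cI i T (rowl (\<rho>-1) [0..<b]) = 0"
      unfolding cI_zero rowl_def
    proof (intro ballI notI)
      fix p assume pm: "p \<in> set (map (\<lambda>c. ((\<rho>-1), c)) [0..<b])" and pe: "T p = unpr i"
      then obtain g where g: "g < b" "T (\<rho>-1,g) = unpr i" by auto
      have nz1: "T (\<rho>-1,g) \<noteq> 0" using g i1 by (simp add: unpr_def)
      have nz2: "T (\<rho>, g) \<noteq> 0" using pt_conv[OF pt nz1 nzy, of \<rho> g] g by simp
      have "T (\<rho>-1,g) \<le> T (\<rho>,g)" using pt_colmono[OF pt nz1 nz2] by simp
      moreover have "T (\<rho>,g) \<noteq> T (\<rho>-1,g)" using pt_evencol[OF pt nz1, of \<rho>] g r1 by (simp add: unpr_def)
      moreover have "T (\<rho>,g) \<le> T (\<rho>,b)" using pt_rowmono[OF pt nz2 nzy] g by simp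
      moreover have "T (\<rho>,g) \<noteq> T (\<rho>,b)" using pt_oddrow[OF pt nzy, of g] True y g by (auto simp: pr_def)
      ultimately show False using True y g by (auto simp: pr_def unpr_def)
    qed
    show ?thesis using IH cb sI z1 sJ z2 y by simp
  next
    case False
    then have Tu: "T y = unpr (i+1)" using step.prems(1) by (simp add: inset_def)
    have w: "0 < b" "z = (\<rho>, b - 1)" using step_west[OF pt Tu step.hyps(1)] y by auto
    have IH: "(if T q = unpr (i+1) then 1 else 0) + cI i T (rowl (\<rho>-1) [0..<b-1])
      + cJ i T (rowl \<rho> [b..<?B]) \<le> gg i T ?B \<rho>"
      using step.IH insz w r1 by simp
    have sJ: "cJ i T (rowl \<rho> [b..<?B]) = 1 + cJ i T (rowl \<rho> [Suc b..<?B])"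
      using bB Tu y by (simp add: upt_conv_Cons rowl_def cJ_Cons)
    have sI: "cI i T (rowl (\<rho>-1) [0..<b]) \<le> cI i T (rowl (\<rho>-1) [0..<b-1]) + 1"
    proof -
      have "[0..<b] = [0..<b-1] @ [b-1]" using w(1)
        by (metis Suc_diff_1 upt_Suc_append zero_le)
      then show ?thesis using cI_snoc[of i T "rowl (\<rho>-1) [0..<b-1]" "(\<rho>-1,b-1)"] by (simp add: rowl_def)
    qed
    show ?thesis using IH sJ sI y by simp
  qed
qed

lemma upd1:
  assumes pt: "primed_tableau k lam mu T" and x: "T (r,c) \<noteq> 0" and v0: "v \<noteq> 0" and vk: "v \<le> 2*k"
  and a: "\<And>c'. T(r,c') \<noteq> 0 \<Longrightarrow> c' < c \<Longrightarrow> T(r,c') \<le> v"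
  and b: "\<And>c'. T(r,c') \<noteq> 0 \<Longrightarrow> c < c' \<Longrightarrow> v \<le> T(r,c')"
  and cc: "\<And>r'. T(r',c) \<noteq> 0 \<Longrightarrow> r' < r \<Longrightarrow> T(r',c) \<le> v"
  and d: "\<And>r'. T(r',c) \<noteq> 0 \<Longrightarrow> r < r' \<Longrightarrow> v \<le> T(r',c)"
  and e: "\<And>c'. odd v \<Longrightarrow> c' \<noteq> c \<Longrightarrow> T(r,c') \<noteq> 0 \<Longrightarrow> T(r,c') \<noteq> v"
  and f: "\<And>r'. even v \<Longrightarrow> r' \<noteq> r \<Longrightarrow> T(r',c) \<noteq> 0 \<Longrightarrow> T(r',c) \<noteq> v"
  shows "primed_tableau k lam mu (T((r,c) := v))"
proof -
  let ?T = "T((r,c) := v)"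
  have sup: "{p. ?T p \<noteq> 0} = {p. T p \<noteq> 0}" using x v0 by auto
  have bd: "\<forall>p. ?T p \<noteq> 0 \<longrightarrow> ?T p \<le> 2 * k" using pt vk unfolding primed_tableau_def by auto
  have row: "\<forall>r0 c1 c2. ?T (r0, c1) \<noteq> 0 \<and> ?T (r0, c2) \<noteq> 0 \<and> c1 \<le> c2 \<longrightarrow> ?T (r0, c1) \<le> ?T (r0, c2)"
  proof (intro allI impI)
    fix r0 c1 c2 assume h: "?T (r0, c1) \<noteq> 0 \<and> ?T (r0, c2) \<noteq> 0 \<and> c1 \<le> c2"
    show "?T (r0, c1) \<le> ?T (r0, c2)"
      using h pt_rowmono[OF pt, of r0 c1 c2] a[of c1] b[of c2]
      by (cases "(r0,c1) = (r,c)"; cases "(r0,c2) = (r,c)") auto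
  qed
  have col: "\<forall>r1 r2 c0. ?T (r1, c0) \<noteq> 0 \<and> ?T (r2, c0) \<noteq> 0 \<and> r1 \<le> r2 \<longrightarrow> ?T (r1, c0) \<le> ?T (r2, c0)"
  proof (intro allI impI)
    fix r1 r2 c0 assume h: "?T (r1, c0) \<noteq> 0 \<and> ?T (r2, c0) \<noteq> 0 \<and> r1 \<le> r2"
    show "?T (r1, c0) \<le> ?T (r2, c0)"
      using h pt_colmono[OF pt, of r1 c0 r2] cc[of r1] d[of r2]
      by (cases "(r1,c0) = (r,c)"; cases "(r2,c0) = (r,c)") auto
  qed
  have odr: "\<forall>r0 c1 c2. ?T (r0, c1) \<noteq> 0 \<and> odd (?T (r0, c1)) \<and> c1 \<noteq> c2 \<longrightarrow> ?T (r0, c2) \<noteq> ?T (r0, c1)"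
  proof (intro allI impI)
    fix r0 c1 c2 assume h: "?T (r0, c1) \<noteq> 0 \<and> odd (?T (r0, c1)) \<and> c1 \<noteq> c2"
    show "?T (r0, c2) \<noteq> ?T (r0, c1)"
      using h pt_oddrow[OF pt, of r0 c1 c2] e[of c2] e[of c1] v0
      by (cases "(r0,c1) = (r,c)"; cases "(r0,c2) = (r,c)") auto
  qed
  have evc: "\<forall>r1 r2 c0. ?T (r1, c0) \<noteq> 0 \<and> even (?T (r1, c0)) \<and> r1 \<noteq> r2 \<longrightarrow> ?T (r2, c0) \<noteq> ?T (r1, c0)"
  proof (intro allI impI)
    fix r1 r2 c0 assume h: "?T (r1, c0) \<noteq> 0 \<and> even (?T (r1, c0)) \<and> r1 \<noteq> r2"
    show "?T (r2, c0) \<noteq> ?T (r1, c0)"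
      using h pt_evencol[OF pt, of r1 c0 r2] f[of r2] f[of r1] v0
      by (cases "(r1,c0) = (r,c)"; cases "(r2,c0) = (r,c)") auto
  qed
  show ?thesis using pt sup bd row col odr evc unfolding primed_tableau_def by simp
qed



lemma cv_ge: "cval T p \<ge> enat n \<longleftrightarrow> T p = 0 \<or> n \<le> T p" by (simp add: cval_def)
lemma cv_gt: "cval T p > enat n \<longleftrightarrow> T p = 0 \<or> n < T p" by (simp add: cval_def)
lemma cv_eq: "n \<noteq> 0 \<Longrightarrow> cval T p = enat n \<longleftrightarrow> T p = n" by (simp add: cval_def)
lemma cv_in: "cval T p \<in> {enat a, enat b} \<longleftrightarrow> T p \<noteq> 0 \<and> (T p = a \<or> T p = b)" by (simp add: cval_def)

theorem lemma3p2:
  fixes k i :: nat and lam mu :: "nat list" and T :: ptab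
  assumes "primed_tableau k lam mu T"
    and "1 \<le> i" and "i \<le> k - 1"
    and "f_op i T \<noteq> None"
  shows "((fq i T = fx i T \<and> T (fx i T) = unpr i \<and>
            f_op i T = Some (T(fx i T := unpr (i + 1))))
       \<or> (fq i T \<noteq> fx i T \<and> T (fx i T) = unpr i \<and> T (fq i T) = pr (i + 1) \<and>
            f_op i T = Some (T(fx i T := pr (i + 1), fq i T := unpr (i + 1)))))
       \<and> primed_tableau k lam mu (the (f_op i T))"
proof -
  note pt = assms(1)
  have i1: "1 \<le> i" using assms(2) .
  have ik: "2*i+2 \<le> 2*k" using assms(2,3) by arith
  have uv: "unpr i = 2*i" "unpr (i+1) = 2*i+2" "pr (i+1) = 2*i+1" by (simp_all add: unpr_def pr_def)
  let ?B = "bnd T"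
  have ne: "unbracketed_i i T \<noteq> []" using assms(4) by (auto simp: f_op_def)
  define x where "x = fx i T"
  have xin: "x \<in> set (unbracketed_i i T)" using ne by (simp add: x_def fx_def)
  have ub: "unbracketed_i i T = unbr_i i T 0 (RF ?B 0)"
    unfolding unbracketed_i_def reading_boxes_def RF_def rowl_def
    by (rule unbr_filter) (use i1 in \<open>auto simp: unpr_def\<close>)
  have Tx: "T x = unpr i" using xin unbr_set[of i T 0 "RF ?B 0"] ub by auto
  obtain r c where xrc: "x = (r,c)" by fastforce
  have Txv: "T (r,c) = 2*i" using Tx xrc by (simp add: unpr_def)
  have nzx: "T (r,c) \<noteq> 0" using Txv i1 by simp
  have rB: "r < ?B" and cB: "c < ?B" using pt_bnd[OF pt nzx] by auto
  define pre where "pre = RF ?B (Suc r) @ rowl r [0..<c]"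
  define post where "post = rowl r [Suc c..<?B] @ concat (map (\<lambda>\<rho>. rowl \<rho> [0..<?B]) (rev [0..<r]))"
  have dec: "RF ?B 0 = pre @ x # post"
  proof -
    have "[0..<?B] = [0..<r] @ r # [Suc r..<?B]" by (rule upt_split[OF rB])
    then have "rev [0..<?B] = rev [Suc r..<?B] @ r # rev [0..<r]" by simp
    moreover have "rowl r [0..<?B] = rowl r [0..<c] @ x # rowl r [Suc c..<?B]"
      using upt_split[OF cB] xrc by (simp add: rowl_def)
    ultimately show ?thesis by (simp add: RF_def pre_def post_def)
  qed
  have xpre: "x \<notin> set pre" by (auto simp: pre_def RF_def rowl_def xrc)
  have xpost: "x \<notin> set post" by (auto simp: post_def rowl_def xrc)
  have spl: "unbracketed_i i T = unbr_i i T 0 pre @ unbr_i i T (cnt i T 0 pre) (x # post)"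
    by (simp add: ub dec unbr_append)
  have c0: "cnt i T 0 pre = 0"
  proof (rule ccontr)
    assume h: "cnt i T 0 pre \<noteq> 0"
    then have "unbr_i i T (cnt i T 0 pre) (x # post) = unbr_i i T (cnt i T 0 pre - 1) post"
      using Tx by (simp add: unpr_def)
    then have "x \<in> set pre \<or> x \<in> set post" using xin spl unbr_set[of i T 0 pre]
      unbr_set[of i T "cnt i T 0 pre - 1" post] by auto
    then show False using xpre xpost by blast
  qed
  have L: "unbracketed_i i T = unbr_i i T 0 pre @ x # unbr_i i T 0 post"
    using spl c0 Tx by (simp add: unpr_def)
  have post0: "unbr_i i T 0 post = []"
  proof (rule ccontr)
    assume h: "unbr_i i T 0 post \<noteq> []"
    have "x = last (unbracketed_i i T)" by (simp add: x_def fx_def)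
    also have "\<dots> = last (unbr_i i T 0 post)" using h by (simp add: L)
    finally have "x \<in> set (unbr_i i T 0 post)" using h by simp
    then show False using xpost unbr_set[of i T 0 post] by auto
  qed
  have U1: "gg i T ?B (Suc r) \<le> cI i T (rowl r [0..<c])"
  proof -
    have "cnt i T 0 pre = cnt i T (gg i T ?B (Suc r)) (rowl r [0..<c])"
      by (simp add: pre_def cnt_append gg_def)
    then show ?thesis using c0 cnt_bound[where i=i and T=T and n="gg i T ?B (Suc r)" and ys="rowl r [0..<c]"]
      by simp
  qed
  have U2: "T (r, Suc c) \<noteq> 2*i"
  proof
    assume h: "T (r, Suc c) = 2*i"
    then have "T (r, Suc c) \<noteq> 0" using i1 by simp
    then have "Suc c < ?B" using pt_bnd[OF pt] by fastforce
    then have "post = (r, Suc c) # rowl r [Suc (Suc c)..<?B] @ concat (map (\<lambda>\<rho>. rowl \<rho> [0..<?B]) (rev [0..<r]))"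
      by (simp add: post_def rowl_def upt_conv_Cons)
    then have "unbr_i i T 0 post \<noteq> []" using h by (simp add: unpr_def)
    then show False using post0 by simp
  qed
  have F_left: "\<And>c'. T(r,c') \<noteq> 0 \<Longrightarrow> c' < c \<Longrightarrow> T(r,c') \<le> 2*i"
    using pt_rowmono[OF pt _ nzx] Txv by fastforce
  have F_up: "\<And>r'. T(r',c) \<noteq> 0 \<Longrightarrow> r' < r \<Longrightarrow> T(r',c) < 2*i"
  proof -
    fix r' assume "T(r',c) \<noteq> 0" "r' < r"
    then show "T(r',c) < 2*i"
      using pt_colmono[OF pt _ nzx, of r'] pt_evencol[OF pt nzx, of r'] Txv by fastforce
  qed
  have F_E: "T(r,Suc c) = 0 \<or> T(r,Suc c) = 2*i+1 \<or> 2*i+2 \<le> T(r,Suc c)"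
    using pt_rowmono[OF pt nzx, of "Suc c"] Txv U2 by fastforce
  have F_right: "\<And>c'. T(r,c') \<noteq> 0 \<Longrightarrow> Suc c < c' \<Longrightarrow> T(r,Suc c) \<noteq> 0 \<and> T(r,Suc c) \<le> T(r,c')"
  proof -
    fix c' assume h: "T(r,c') \<noteq> 0" "Suc c < c'"
    then have "T(r,Suc c) \<noteq> 0" using pt_conv[OF pt nzx h(1), of r "Suc c"] by simp
    then show "T(r,Suc c) \<noteq> 0 \<and> T(r,Suc c) \<le> T(r,c')" using pt_rowmono[OF pt _ h(1)] h by simp
  qed
  have F_S: "T(Suc r,c) = 0 \<or> 2*i+1 \<le> T(Suc r,c)"
    using pt_colmono[OF pt nzx, of "Suc r"] pt_evencol[OF pt nzx, of "Suc r"] Txv by fastforce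
  have F_down: "\<And>r'. T(r',c) \<noteq> 0 \<Longrightarrow> Suc r < r' \<Longrightarrow> T(Suc r,c) \<noteq> 0 \<and> T(Suc r,c) \<le> T(r',c)"
  proof -
    fix r' assume h: "T(r',c) \<noteq> 0" "Suc r < r'"
    then have "T(Suc r,c) \<noteq> 0" using pt_conv[OF pt nzx h(1), of "Suc r" c] by simp
    then show "T(Suc r,c) \<noteq> 0 \<and> T(Suc r,c) \<le> T(r',c)" using pt_colmono[OF pt _ h(1)] h by simp
  qed
  have F_down2: "\<And>r'. T(r',c) \<noteq> 0 \<Longrightarrow> r < r' \<Longrightarrow> 2*i+1 \<le> T(r',c)"
  proof -
    fix r' assume h: "T(r',c) \<noteq> 0" "r < r'"
    show "2*i+1 \<le> T(r',c)"
    proof (cases "r' = Suc r")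
      case True then show ?thesis using F_S h by auto
    next
      case False then show ?thesis using F_down[OF h(1)] F_S h by fastforce
    qed
  qed
  have fqe: "fq i T = (if (T(r,Suc c) = 0 \<or> 2*i+2 \<le> T(r,Suc c)) \<and> (T(Suc r,c) = 0 \<or> 2*i+2 < T(Suc r,c)) then x
     else if T(r,Suc c) = 2*i+1 then (r,Suc c)
     else if (T(r,Suc c) = 0 \<or> 2*i+2 \<le> T(r,Suc c)) \<and> T(Suc r,c) \<noteq> 0 \<and> (T(Suc r,c) = 2*i+1 \<or> T(Suc r,c) = 2*i+2)
       then ribbon_end T i (Suc r, c) else undefined)"
    unfolding fq_def Let_def x_def[symmetric] using xrc
    by (simp add: cv_ge cv_gt cv_eq cv_in unpr_def pr_def)
  have fop: "f_op i T = Some ((T(x := T x + 1))(fq i T := (T(x := T x + 1)) (fq i T) + 1))"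
    using ne by (simp add: f_op_def x_def Let_def)
  have xfx: "fx i T = x" by (simp add: x_def)
  consider (c1) "(T(r,Suc c) = 0 \<or> 2*i+2 \<le> T(r,Suc c)) \<and> (T(Suc r,c) = 0 \<or> 2*i+2 < T(Suc r,c))"
    | (c2) "\<not> ((T(r,Suc c) = 0 \<or> 2*i+2 \<le> T(r,Suc c)) \<and> (T(Suc r,c) = 0 \<or> 2*i+2 < T(Suc r,c)))"
        "T(r,Suc c) = 2*i+1"
    | (c3) "\<not> ((T(r,Suc c) = 0 \<or> 2*i+2 \<le> T(r,Suc c)) \<and> (T(Suc r,c) = 0 \<or> 2*i+2 < T(Suc r,c)))"
        "T(r,Suc c) \<noteq> 2*i+1"
        "(T(r,Suc c) = 0 \<or> 2*i+2 \<le> T(r,Suc c))" "T(Suc r,c) \<noteq> 0" "(T(Suc r,c) = 2*i+1 \<or> T(Suc r,c) = 2*i+2)"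
    using F_E F_S by fastforce
  then show ?thesis
  proof cases
    case c1
    have q: "fq i T = x" using fqe c1 by simp
    have res: "f_op i T = Some (T(x := 2*i+2))" using fop q Tx by (simp add: unpr_def)
    have tab: "primed_tableau k lam mu (T((r,c) := 2*i+2))"
    proof (rule upd1[OF pt nzx])
      show "2*i+2 \<noteq> 0" by simp
      show "2*i+2 \<le> 2*k" using ik .
      show "\<And>c'. T(r,c') \<noteq> 0 \<Longrightarrow> c' < c \<Longrightarrow> T(r,c') \<le> 2*i+2" using F_left by fastforce
      show "\<And>c'. T(r,c') \<noteq> 0 \<Longrightarrow> c < c' \<Longrightarrow> 2*i+2 \<le> T(r,c')"
      proof -
        fix c' assume h: "T(r,c') \<noteq> 0" "c < c'"
        show "2*i+2 \<le> T(r,c')"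
        proof (cases "c' = Suc c")
          case True then show ?thesis using c1 h by auto
        next
          case False then show ?thesis using F_right[OF h(1)] c1 h by fastforce
        qed
      qed
      show "\<And>r'. T(r',c) \<noteq> 0 \<Longrightarrow> r' < r \<Longrightarrow> T(r',c) \<le> 2*i+2" using F_up by fastforce
      have dd: "\<And>r'. T(r',c) \<noteq> 0 \<Longrightarrow> r < r' \<Longrightarrow> 2*i+2 < T(r',c)"
      proof -
        fix r' assume h: "T(r',c) \<noteq> 0" "r < r'"
        show "2*i+2 < T(r',c)"
        proof (cases "r' = Suc r")
          case True then show ?thesis using c1 h by auto
        next
          case False then show ?thesis using F_down[OF h(1)] c1 h by fastforce
        qed
      qed
      then show "\<And>r'. T(r',c) \<noteq> 0 \<Longrightarrow> r < r' \<Longrightarrow> 2*i+2 \<le> T(r',c)" by fastforce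
      show "\<And>c'. odd (2*i+2) \<Longrightarrow> c' \<noteq> c \<Longrightarrow> T(r,c') \<noteq> 0 \<Longrightarrow> T(r,c') \<noteq> 2*i+2" by simp
      show "\<And>r'. even (2*i+2) \<Longrightarrow> r' \<noteq> r \<Longrightarrow> T(r',c) \<noteq> 0 \<Longrightarrow> T(r',c) \<noteq> 2*i+2"
        using dd F_up by (metis less_irrefl linorder_neqE_nat less_imp_le_nat not_less order.strict_trans2 trans_less_add1 less_Suc_eq le_less_trans)
    qed
    show ?thesis using q res tab Tx xrc xfx by (simp add: unpr_def)
  next
    case c2
    have q: "fq i T = (r, Suc c)" using fqe c2 by simp
    have Ex: "(r, Suc c) \<noteq> x" using xrc by simp
    have res: "f_op i T = Some (T(x := 2*i+1, (r,Suc c) := 2*i+2))" using fop q Tx Ex c2 by (simp add: unpr_def)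
    have nzE: "T(r,Suc c) \<noteq> 0" using c2 by simp
    have SEnot2: "T(Suc r, Suc c) \<noteq> 2*i+2"
    proof
      assume h: "T(Suc r, Suc c) = 2*i+2"
      have nzSE: "T(Suc r, Suc c) \<noteq> 0" using h by simp
      have nzS: "T(Suc r, c) \<noteq> 0" using pt_conv[OF pt nzx nzSE, of "Suc r" c] by simp
      have "T(Suc r, c) \<le> T(Suc r, Suc c)" using pt_rowmono[OF pt nzS nzSE] by simp
      then have insS: "inset T i (Suc r, c)" using F_S nzS h by (auto simp: inset_def pr_def unpr_def)
      obtain qq where qq: "((Suc r, c), qq) \<in> (rstep T i)\<^sup>*" "\<forall>q'. (qq, q') \<notin> rstep T i"
        using term_exists[OF pt] by blast
      note iv = inv_path[OF pt i1 qq(2) qq(1) insS]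
      have "Suc c < ?B" using pt_bnd[OF pt nzSE] by simp
      then have "cJ i T (rowl (Suc r) [Suc c..<?B]) \<ge> 1"
        using h by (simp add: upt_conv_Cons rowl_def cJ_Cons unpr_def)
      then show False using iv U1 by simp
    qed
    have FSE: "\<And>r'. T(r', Suc c) \<noteq> 0 \<Longrightarrow> r < r' \<Longrightarrow> 2*i+2 < T(r', Suc c)"
    proof -
      fix r' assume h: "T(r', Suc c) \<noteq> 0" "r < r'"
      have nzSE: "T(Suc r, Suc c) \<noteq> 0" using pt_conv[OF pt nzE h(1), of "Suc r" "Suc c"] h by simp
      have nzS: "T(Suc r, c) \<noteq> 0" using pt_conv[OF pt nzx nzSE, of "Suc r" c] by simp
      have a1: "T(r,Suc c) \<le> T(Suc r, Suc c)" using pt_colmono[OF pt nzE nzSE] by simp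
      have a2: "T(Suc r,c) \<le> T(Suc r, Suc c)" using pt_rowmono[OF pt nzS nzSE] by simp
      have a3: "T(Suc r, Suc c) \<noteq> 2*i+1"
      proof
        assume "T(Suc r, Suc c) = 2*i+1"
        then have "T(Suc r, c) = 2*i+1" using a2 F_S nzS by simp
        then show False using pt_oddrow[OF pt nzS, of "Suc c"] \<open>T(Suc r, Suc c) = 2*i+1\<close> by simp
      qed
      have a4: "T(Suc r, Suc c) \<le> T(r', Suc c)" using pt_colmono[OF pt nzSE h(1)] h by simp
      show "2*i+2 < T(r', Suc c)" using a1 a3 a4 SEnot2 c2 by simp
    qed
    have E_right: "\<And>c'. T(r,c') \<noteq> 0 \<Longrightarrow> Suc c < c' \<Longrightarrow> 2*i+2 \<le> T(r,c')"
    proof -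
      fix c' assume h: "T(r,c') \<noteq> 0" "Suc c < c'"
      have "T(r,Suc c) \<le> T(r,c')" using pt_rowmono[OF pt nzE h(1)] h by simp
      moreover have "T(r,c') \<noteq> T(r,Suc c)" using pt_oddrow[OF pt nzE, of c'] c2 h by simp
      ultimately show "2*i+2 \<le> T(r,c')" using c2 by simp
    qed
    have tab1: "primed_tableau k lam mu (T((r,Suc c) := 2*i+2))"
    proof (rule upd1[OF pt nzE])
      show "2*i+2 \<noteq> 0" by simp
      show "2*i+2 \<le> 2*k" using ik .
      show "\<And>c'. T(r,c') \<noteq> 0 \<Longrightarrow> c' < Suc c \<Longrightarrow> T(r,c') \<le> 2*i+2"
        using pt_rowmono[OF pt _ nzE] c2 by fastforce
      show "\<And>c'. T(r,c') \<noteq> 0 \<Longrightarrow> Suc c < c' \<Longrightarrow> 2*i+2 \<le> T(r,c')" using E_right by blast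
      show "\<And>r'. T(r',Suc c) \<noteq> 0 \<Longrightarrow> r' < r \<Longrightarrow> T(r',Suc c) \<le> 2*i+2"
        using pt_colmono[OF pt _ nzE] c2 by fastforce
      show "\<And>r'. T(r',Suc c) \<noteq> 0 \<Longrightarrow> r < r' \<Longrightarrow> 2*i+2 \<le> T(r',Suc c)" using FSE by fastforce
      show "\<And>c'. odd (2*i+2) \<Longrightarrow> c' \<noteq> Suc c \<Longrightarrow> T(r,c') \<noteq> 0 \<Longrightarrow> T(r,c') \<noteq> 2*i+2" by simp
      show "\<And>r'. even (2*i+2) \<Longrightarrow> r' \<noteq> r \<Longrightarrow> T(r',Suc c) \<noteq> 0 \<Longrightarrow> T(r',Suc c) \<noteq> 2*i+2"
      proof -
        fix r' assume h: "r' \<noteq> r" "T(r',Suc c) \<noteq> 0"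
        show "T(r',Suc c) \<noteq> 2*i+2"
        proof (cases "r' < r")
          case True then show ?thesis using pt_colmono[OF pt h(2) nzE] c2 by simp
        next
          case False then show ?thesis using FSE[OF h(2)] h by simp
        qed
      qed
    qed
    let ?T2 = "T((r,Suc c) := 2*i+2)"
    have tab2: "primed_tableau k lam mu (?T2((r,c) := 2*i+1))"
    proof (rule upd1[OF tab1])
      show "?T2 (r,c) \<noteq> 0" using nzx by simp
      show "2*i+1 \<noteq> 0" by simp
      show "2*i+1 \<le> 2*k" using ik by simp
      show "\<And>c'. ?T2(r,c') \<noteq> 0 \<Longrightarrow> c' < c \<Longrightarrow> ?T2(r,c') \<le> 2*i+1"
      proof -
        fix c' assume h: "?T2(r,c') \<noteq> 0" "c' < c"
        then have "T(r,c') \<noteq> 0" "c' \<noteq> Suc c" by (auto split: if_splits)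
        then show "?T2(r,c') \<le> 2*i+1" using F_left[of c'] h by simp
      qed
      show "\<And>c'. ?T2(r,c') \<noteq> 0 \<Longrightarrow> c < c' \<Longrightarrow> 2*i+1 \<le> ?T2(r,c')"
      proof -
        fix c' assume h: "?T2(r,c') \<noteq> 0" "c < c'"
        show "2*i+1 \<le> ?T2(r,c')"
        proof (cases "c' = Suc c")
          case False
          then have "T(r,c') \<noteq> 0" "Suc c < c'" using h by auto
          then show ?thesis using E_right[of c'] False by simp
        qed simp
      qed
      show "\<And>r'. ?T2(r',c) \<noteq> 0 \<Longrightarrow> r' < r \<Longrightarrow> ?T2(r',c) \<le> 2*i+1"
      proof -
        fix r' assume h: "?T2(r',c) \<noteq> 0" "r' < r"
        then show "?T2(r',c) \<le> 2*i+1" using F_up[of r'] by simp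
      qed
      show "\<And>r'. ?T2(r',c) \<noteq> 0 \<Longrightarrow> r < r' \<Longrightarrow> 2*i+1 \<le> ?T2(r',c)"
      proof -
        fix r' assume h: "?T2(r',c) \<noteq> 0" "r < r'"
        then show "2*i+1 \<le> ?T2(r',c)" using F_down2[of r'] by simp
      qed
      show "\<And>c'. odd (2*i+1) \<Longrightarrow> c' \<noteq> c \<Longrightarrow> ?T2(r,c') \<noteq> 0 \<Longrightarrow> ?T2(r,c') \<noteq> 2*i+1"
      proof -
        fix c' assume h: "c' \<noteq> c" "?T2(r,c') \<noteq> 0"
        show "?T2(r,c') \<noteq> 2*i+1"
        proof (cases "c' < c")
          case True then show ?thesis using F_left[of c'] h by simp
        next
          case False
          then have "c' = Suc c \<or> Suc c < c'" using h by linarith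
          then show ?thesis using E_right[of c'] h by auto
        qed
      qed
      show "\<And>r'. even (2*i+1) \<Longrightarrow> r' \<noteq> r \<Longrightarrow> ?T2(r',c) \<noteq> 0 \<Longrightarrow> ?T2(r',c) \<noteq> 2*i+1" by simp
    qed
    have eqT: "?T2((r,c) := 2*i+1) = T(x := 2*i+1, (r,Suc c) := 2*i+2)"
      using xrc by (auto simp: fun_upd_twist)
    show ?thesis using q res tab2 eqT Tx xrc xfx Ex c2 by (simp add: unpr_def pr_def)
  next
    case c3
    have nS: "\<not> (2*i+2 < T(Suc r,c))" "T(Suc r, c) \<noteq> 0" using c3(4,5) by auto
    have q: "fq i T = ribbon_end T i (Suc r, c)" using fqe c3(2,3,4,5) nS by simp
    have insS: "inset T i (Suc r, c)" using c3 by (auto simp: inset_def pr_def unpr_def)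
    obtain qq where qq: "((Suc r, c), qq) \<in> (rstep T i)\<^sup>*" "\<forall>q'. (qq, q') \<notin> rstep T i"
      using term_exists[OF pt] by blast
    have rq: "ribbon_end T i (Suc r, c) = qq" using ribbon_eq[OF pt insS qq(1) qq(2)] .
    note iv = inv_path[OF pt i1 qq(2) qq(1) insS]
    have nj: "T qq \<noteq> unpr (i+1)" using iv U1 by (auto split: if_splits)
    have insq: "inset T i qq" using reach_inset[OF qq(1) insS] .
    have Tq: "T qq = 2*i+1" using insq nj by (auto simp: inset_def pr_def unpr_def)
    obtain a w where qw: "qq = (a,w)" by fastforce
    have aR: "Suc r \<le> a" using reach_row[OF qq(1)] qw by simp
    have Taw: "T (a,w) = 2*i+1" using Tq qw by simp
    have nzq: "T (a,w) \<noteq> 0" using Taw by simp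
    have qx: "qq \<noteq> x" using qw xrc aR by simp
    have res: "f_op i T = Some (T(x := 2*i+1, qq := 2*i+2))" using fop q rq Tx qx Tq by (simp add: unpr_def)
    have tS: "\<not> inset T i (Suc a, w)" using qq(2) qw by (auto simp: rstep_iff)
    have Rright: "\<And>c'. T(r,c') \<noteq> 0 \<Longrightarrow> c < c' \<Longrightarrow> 2*i+2 \<le> T(r,c')"
    proof -
      fix c' assume h: "T(r,c') \<noteq> 0" "c < c'"
      show "2*i+2 \<le> T(r,c')"
      proof (cases "c' = Suc c")
        case True then show ?thesis using c3 h by auto
      next
        case False then show ?thesis using F_right[OF h(1)] c3 h by fastforce
      qed
    qed
    have tab1: "primed_tableau k lam mu (T((r,c) := 2*i+1))"
    proof (rule upd1[OF pt nzx])
      show "2*i+1 \<noteq> 0" by simp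
      show "2*i+1 \<le> 2*k" using ik by simp
      show "\<And>c'. T(r,c') \<noteq> 0 \<Longrightarrow> c' < c \<Longrightarrow> T(r,c') \<le> 2*i+1" using F_left by fastforce
      show "\<And>c'. T(r,c') \<noteq> 0 \<Longrightarrow> c < c' \<Longrightarrow> 2*i+1 \<le> T(r,c')" using Rright by fastforce
      show "\<And>r'. T(r',c) \<noteq> 0 \<Longrightarrow> r' < r \<Longrightarrow> T(r',c) \<le> 2*i+1" using F_up by fastforce
      show "\<And>r'. T(r',c) \<noteq> 0 \<Longrightarrow> r < r' \<Longrightarrow> 2*i+1 \<le> T(r',c)" using F_down2 by fastforce
      show "\<And>c'. odd (2*i+1) \<Longrightarrow> c' \<noteq> c \<Longrightarrow> T(r,c') \<noteq> 0 \<Longrightarrow> T(r,c') \<noteq> 2*i+1"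
      proof -
        fix c' assume h: "c' \<noteq> c" "T(r,c') \<noteq> 0"
        show "T(r,c') \<noteq> 2*i+1"
        proof (cases "c' < c")
          case True then show ?thesis using F_left[OF h(2)] by simp
        next
          case False then show ?thesis using Rright[OF h(2)] h by simp
        qed
      qed
      show "\<And>r'. even (2*i+1) \<Longrightarrow> r' \<noteq> r \<Longrightarrow> T(r',c) \<noteq> 0 \<Longrightarrow> T(r',c) \<noteq> 2*i+1" by simp
    qed
    let ?T1 = "T((r,c) := 2*i+1)"
    have ar: "a \<noteq> r" using aR by simp
    have belowq: "\<And>r'. T(r',w) \<noteq> 0 \<Longrightarrow> a < r' \<Longrightarrow> 2*i+2 < T(r',w)"
    proof -
      fix r' assume h: "T(r',w) \<noteq> 0" "a < r'"
      have nzb: "T(Suc a, w) \<noteq> 0" using pt_conv[OF pt nzq h(1), of "Suc a" w] h by simp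
      have "T(a,w) \<le> T(Suc a,w)" using pt_colmono[OF pt nzq nzb] by simp
      then have "2*i+2 < T(Suc a, w)" using tS Taw by (auto simp: inset_def pr_def unpr_def)
      moreover have "T(Suc a,w) \<le> T(r',w)" using pt_colmono[OF pt nzb h(1)] h by simp
      ultimately show "2*i+2 < T(r',w)" by simp
    qed
    have aboveq: "\<And>r'. ?T1(r',w) \<noteq> 0 \<Longrightarrow> r' < a \<Longrightarrow> ?T1(r',w) \<le> 2*i+1"
    proof -
      fix r' assume h: "?T1(r',w) \<noteq> 0" "r' < a"
      show "?T1(r',w) \<le> 2*i+1"
      proof (cases "(r',w) = (r,c)")
        case True then show ?thesis by simp
      next
        case False
        then have "T(r',w) \<noteq> 0" using h by (auto split: if_splits)
        then show ?thesis using pt_colmono[OF pt _ nzq, of r'] h False Taw by simp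
      qed
    qed
    have tab2: "primed_tableau k lam mu (?T1((a,w) := 2*i+2))"
    proof (rule upd1[OF tab1])
      show "?T1 (a,w) \<noteq> 0" using nzq ar by simp
      show "2*i+2 \<noteq> 0" by simp
      show "2*i+2 \<le> 2*k" using ik .
      show "\<And>c'. ?T1(a,c') \<noteq> 0 \<Longrightarrow> c' < w \<Longrightarrow> ?T1(a,c') \<le> 2*i+2"
      proof -
        fix c' assume h: "?T1(a,c') \<noteq> 0" "c' < w"
        then have "T(a,c') \<noteq> 0" using ar by simp
        then show "?T1(a,c') \<le> 2*i+2" using pt_rowmono[OF pt _ nzq, of c'] h ar Taw by simp
      qed
      show "\<And>c'. ?T1(a,c') \<noteq> 0 \<Longrightarrow> w < c' \<Longrightarrow> 2*i+2 \<le> ?T1(a,c')"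
      proof -
        fix c' assume h: "?T1(a,c') \<noteq> 0" "w < c'"
        then have nz: "T(a,c') \<noteq> 0" using ar by simp
        have "T(a,w) \<le> T(a,c')" using pt_rowmono[OF pt nzq nz] h by simp
        moreover have "T(a,c') \<noteq> T(a,w)" using pt_oddrow[OF pt nzq, of c'] Taw h by simp
        ultimately show "2*i+2 \<le> ?T1(a,c')" using ar Taw by simp
      qed
      show "\<And>r'. ?T1(r',w) \<noteq> 0 \<Longrightarrow> r' < a \<Longrightarrow> ?T1(r',w) \<le> 2*i+2"
        using aboveq by fastforce
      show "\<And>r'. ?T1(r',w) \<noteq> 0 \<Longrightarrow> a < r' \<Longrightarrow> 2*i+2 \<le> ?T1(r',w)"
      proof -
        fix r' assume h: "?T1(r',w) \<noteq> 0" "a < r'"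
        then have "r' \<noteq> r" using aR by simp
        then show "2*i+2 \<le> ?T1(r',w)" using belowq[of r'] h by simp
      qed
      show "\<And>c'. odd (2*i+2) \<Longrightarrow> c' \<noteq> w \<Longrightarrow> ?T1(a,c') \<noteq> 0 \<Longrightarrow> ?T1(a,c') \<noteq> 2*i+2" by simp
      show "\<And>r'. even (2*i+2) \<Longrightarrow> r' \<noteq> a \<Longrightarrow> ?T1(r',w) \<noteq> 0 \<Longrightarrow> ?T1(r',w) \<noteq> 2*i+2"
      proof -
        fix r' assume h: "r' \<noteq> a" "?T1(r',w) \<noteq> 0"
        show "?T1(r',w) \<noteq> 2*i+2"
        proof (cases "r' < a")
          case True then show ?thesis using aboveq[OF h(2)] by simp
        next
          case False
          then have "a < r'" "r' \<noteq> r" using h aR by auto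
          then show ?thesis using belowq[of r'] h by simp
        qed
      qed
    qed
    have eqT: "?T1((a,w) := 2*i+2) = T(x := 2*i+1, qq := 2*i+2)" using xrc qw by simp
    show ?thesis using q rq res tab2 eqT Tx xfx qx Tq by (simp add: unpr_def pr_def)
  qed
qed


end
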